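(* Let $T$ be the regular rooted tree of valence $p\geq 2$ with the embedded wire diffeology $\mathcal{D}_T$. Then the functional diffeology on $\operatorname{Aut}T$ is the discrete diffeology; that is, every plot $P:U\to\operatorname{Aut}T$ (with $U$ an open subset of some $\mathbb{R}^k$) of the functional diffeology is locally constant.
   Context: Fix a finite alphabet $A$ with $|A|=p\geq 2$. The vertices of $T$ are the finite words over $A$ (the root is the empty word); two vertices are joined by an edge iff they have the form $a_1\dots a_n$ and $a_1\dots a_na_{n+1}$. As a topological space, $T$ is the 1-dimensional CW complex obtained by realizing each edge as a copy of $[0,1]$, with its usual topology. $\operatorname{Aut}T$ is the group of bijections of the vertex set fixing the root and preserving adjacency; each is regarded as a homeomorphism of the geometric realization mapping each edge affinely onto its image edge. A diffeology on a set $X$ is a collection of maps $U\to X$ ("plots"), $U$ ranging over open subsets of all $\mathbb{R}^n$, containing all constant maps, closed under precomposition with smooth maps, and satisfying the sheaf condition. The discrete diffeology on $X$ consists of all locally constant maps $U\to X$. The embedded wire diffeology $\mathcal{D}_T$ is the diffeology on $T$ generated by (i.e. the smallest diffeology containing) all maps $\gamma:\mathbb{R}\to T$ that are injective, continuous, and homeomorphisms onto their images. A map between diffeological spaces is smooth if it sends plots to plots. The functional diffeology on $C^\infty(T,T)$ is the coarsest diffeology such that the evaluation map $C^\infty(T,T)\times T\to T$ is smooth (with the product diffeology, the coarsest making projections smooth); $\operatorname{Aut}T\subseteq C^\infty(T,T)$ carries the subset diffeology. Equivalently, $P:U\to\operatorname{Aut}T$ is a plot iff $(u,x)\mapsto P(u)(x)$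 is smooth $U\times T\to T$. *)

theory Defs
  imports "HOL-Analysis.Analysis"
begin

text \<open>R^n is encoded as the set of real sequences vanishing from index n on;
  nat => real carries the product topology, which restricts to the Euclidean
  topology on this set.\<close>

definition Rn :: "nat \<Rightarrow> (nat \<Rightarrow> real) set" where
  "Rn n = {x. \<forall>i\<ge>n. x i = 0}"

definition Rn_top :: "nat \<Rightarrow> (nat \<Rightarrow> real) topology" where
  "Rn_top n = subtopology euclidean (Rn n)"

text \<open>C-infinity real-valued functions on an open W in R^m: all iterated partial
  derivatives exist and are continuous on W (D vs is the iterated partial
  derivative along the coordinate indices listed in vs).\<close>

definition smooth_fun :: "nat \<Rightarrow> (nat \<Rightarrow> real) set \<Rightarrow> ((nat \<Rightarrow> real) \<Rightarrow> real) \<Rightarrow> bool" where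
  "smooth_fun m W g \<longleftrightarrow>
     (\<exists>D :: nat list \<Rightarrow> (nat \<Rightarrow> real) \<Rightarrow> real.
        (\<forall>x\<in>W. D [] x = g x) \<and>
        (\<forall>vs\<in>lists {..<m}. continuous_on W (D vs)) \<and>
        (\<forall>vs\<in>lists {..<m}. \<forall>i<m. \<forall>x\<in>W.
            ((\<lambda>t. D vs (x(i := x i + t))) has_real_derivative D (i # vs) x) (at 0)))"

definition smooth_map :: "nat \<Rightarrow> (nat \<Rightarrow> real) set \<Rightarrow> nat \<Rightarrow> (nat \<Rightarrow> real) set
                          \<Rightarrow> ((nat \<Rightarrow> real) \<Rightarrow> (nat \<Rightarrow> real)) \<Rightarrow> bool" where
  "smooth_map m V n U F \<longleftrightarrow> F ` V \<subseteq> U \<and> (\<forall>i<n. smooth_fun m V (\<lambda>v. F v i))"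

text \<open>A diffeology on a set X is given as a predicate D n U P meaning
  "P restricted to U is a plot, U open in R^n". Values of P outside U are irrelevant.\<close>

definition is_diffeology :: "'x set \<Rightarrow> (nat \<Rightarrow> (nat \<Rightarrow> real) set \<Rightarrow> ((nat \<Rightarrow> real) \<Rightarrow> 'x) \<Rightarrow> bool) \<Rightarrow> bool" where
  "is_diffeology X D \<longleftrightarrow>
     (\<forall>n U P. D n U P \<longrightarrow> openin (Rn_top n) U \<and> P ` U \<subseteq> X) \<and>
     (\<forall>n U P Q. D n U P \<and> (\<forall>u\<in>U. Q u = P u) \<longrightarrow> D n U Q) \<and>
     (\<forall>n U x. openin (Rn_top n) U \<and> x \<in> X \<longrightarrow> D n U (\<lambda>_. x)) \<and>
     (\<forall>n U P m V F. D n U P \<and> openin (Rn_top m) V \<and> smooth_map m V n U F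
         \<longrightarrow> D m V (P \<circ> F)) \<and>
     (\<forall>n U P. openin (Rn_top n) U \<and> P ` U \<subseteq> X \<and>
         (\<forall>u\<in>U. \<exists>V. openin (Rn_top n) V \<and> u \<in> V \<and> V \<subseteq> U \<and> D n V P)
         \<longrightarrow> D n U P)"

text \<open>Plots of the diffeology generated by a family G of maps R -> X
  (smallest diffeology containing them; a map g : R -> X is the plot x |-> g (x 0) on R^1).\<close>

definition gen_plot :: "'x set \<Rightarrow> (real \<Rightarrow> 'x) set \<Rightarrow> nat \<Rightarrow> (nat \<Rightarrow> real) set \<Rightarrow> ((nat \<Rightarrow> real) \<Rightarrow> 'x) \<Rightarrow> bool" where
  "gen_plot X G n U P \<longleftrightarrow>
     (\<forall>D. is_diffeology X D \<and> (\<forall>g\<in>G. D 1 (Rn 1) (\<lambda>x. g (x 0))) \<longrightarrow> D n U P)"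

definition discrete_plot :: "'x set \<Rightarrow> nat \<Rightarrow> (nat \<Rightarrow> real) set \<Rightarrow> ((nat \<Rightarrow> real) \<Rightarrow> 'x) \<Rightarrow> bool" where
  "discrete_plot X n U P \<longleftrightarrow> openin (Rn_top n) U \<and> P ` U \<subseteq> X \<and>
     (\<forall>u\<in>U. \<exists>V. openin (Rn_top n) V \<and> u \<in> V \<and> V \<subseteq> U \<and> (\<forall>v\<in>V. P v = P u))"

text \<open>A point of the realization is either a vertex v,
  encoded (v, 1), or an interior point of the edge from butlast w to w (w nonempty) at
  parameter s in (0,1) measured from the parent butlast w, encoded (w, s).\<close>

definition Tpts :: "'a set \<Rightarrow> ('a list \<times> real) set" where
  "Tpts A = {(v, 1) | v. v \<in> lists A} \<union> {(w, s) | w s. w \<in> lists A \<and> w \<noteq> [] \<and> 0 < s \<and> s < 1}"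

text \<open>Characteristic map [0,1] -> T of the edge ending at the nonempty word w.\<close>

definition edge_map :: "'a list \<Rightarrow> real \<Rightarrow> 'a list \<times> real" where
  "edge_map w t = (if t = 0 then (butlast w, 1) else (w, t))"

text \<open>CW (weak) topology: S is open iff its preimage under every characteristic map is open in [0,1].\<close>

definition T_open :: "'a set \<Rightarrow> ('a list \<times> real) set \<Rightarrow> bool" where
  "T_open A S \<longleftrightarrow> S \<subseteq> Tpts A \<and>
     (\<forall>w\<in>lists A - {[]}. openin (top_of_set {0..1::real}) {t\<in>{0..1}. edge_map w t \<in> S})"

definition T_top :: "'a set \<Rightarrow> ('a list \<times> real) topology" where
  "T_top A = topology (T_open A)"

lemma istopology_T_open: "istopology (T_open A)"
  unfolding istopology_def
proof (intro conjI allI impI)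
  fix S T assume "T_open A S" "T_open A T"
  then show "T_open A (S \<inter> T)"
    unfolding T_open_def
  proof (intro conjI ballI)
    show "S \<inter> T \<subseteq> Tpts A" using \<open>T_open A S\<close> by (auto simp: T_open_def)
  next
    fix w assume w: "w \<in> lists A - {[]}"
    have "{t\<in>{0..1}. edge_map w t \<in> S \<inter> T} = {t\<in>{0..1}. edge_map w t \<in> S} \<inter> {t\<in>{0..1}. edge_map w t \<in> T}" by auto
    moreover have "openin (top_of_set {0..1::real}) ({t\<in>{0..1}. edge_map w t \<in> S} \<inter> {t\<in>{0..1}. edge_map w t \<in> T})"
      using \<open>T_open A S\<close> \<open>T_open A T\<close> w by (intro openin_Int) (auto simp: T_open_def)
    ultimately show "openin (top_of_set {0..1::real}) {t\<in>{0..1}. edge_map w t \<in> S \<inter> T}" by simp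
  qed
next
  fix K assume K: "\<forall>S\<in>K. T_open A S"
  show "T_open A (\<Union>K)"
    unfolding T_open_def
  proof (intro conjI ballI)
    show "\<Union>K \<subseteq> Tpts A" using K by (auto simp: T_open_def)
  next
    fix w assume w: "w \<in> lists A - {[]}"
    have "{t\<in>{0..1}. edge_map w t \<in> \<Union>K} = (\<Union>S\<in>K. {t\<in>{0..1}. edge_map w t \<in> S})" by auto
    moreover have "openin (top_of_set {0..1::real}) (\<Union>S\<in>K. {t\<in>{0..1}. edge_map w t \<in> S})"
      using K w by (intro openin_Union) (auto simp: T_open_def)
    ultimately show "openin (top_of_set {0..1::real}) {t\<in>{0..1}. edge_map w t \<in> \<Union>K}" by simp
  qed
qed

definition wires :: "'a set \<Rightarrow> (real \<Rightarrow> 'a list \<times> real) set" where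
  "wires A = {\<gamma>. range \<gamma> \<subseteq> Tpts A \<and> inj \<gamma> \<and> continuous_map euclideanreal (T_top A) \<gamma> \<and>
                  homeomorphic_map euclideanreal (subtopology (T_top A) (range \<gamma>)) \<gamma>}"

abbreviation wire_plot :: "'a set \<Rightarrow> nat \<Rightarrow> (nat \<Rightarrow> real) set \<Rightarrow> ((nat \<Rightarrow> real) \<Rightarrow> 'a list \<times> real) \<Rightarrow> bool" where
  "wire_plot A \<equiv> gen_plot (Tpts A) (wires A)"

definition tree_adj :: "'a set \<Rightarrow> 'a list \<Rightarrow> 'a list \<Rightarrow> bool" where
  "tree_adj A u v \<longleftrightarrow> (\<exists>a\<in>A. v = u @ [a]) \<or> (\<exists>a\<in>A. u = v @ [a])"

definition is_tree_aut :: "'a set \<Rightarrow> ('a list \<Rightarrow> 'a list) \<Rightarrow> bool" where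
  "is_tree_aut A g \<longleftrightarrow> bij_betw g (lists A) (lists A) \<and> g [] = [] \<and>
     (\<forall>u\<in>lists A. \<forall>v\<in>lists A. tree_adj A u v \<longleftrightarrow> tree_adj A (g u) (g v))"

text \<open>Action of a vertex automorphism on the realization (affine on edges), extended by
  the identity outside the realization.\<close>

definition realize :: "'a set \<Rightarrow> ('a list \<Rightarrow> 'a list) \<Rightarrow> ('a list \<times> real \<Rightarrow> 'a list \<times> real)" where
  "realize A g p = (if p \<in> Tpts A then (g (fst p), snd p) else p)"

definition AutT :: "'a set \<Rightarrow> ('a list \<times> real \<Rightarrow> 'a list \<times> real) set" where
  "AutT A = realize A ` {g. is_tree_aut A g}"

text \<open>Plots of the functional diffeology on Aut T: (u,x) |-> P u x is smooth U x T -> T,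
  i.e. composed with every plot (F, Q) of the product diffeology (F smooth into U,
  Q a wire plot) it yields a wire plot.\<close>

definition aut_plot :: "'a set \<Rightarrow> nat \<Rightarrow> (nat \<Rightarrow> real) set
                        \<Rightarrow> ((nat \<Rightarrow> real) \<Rightarrow> ('a list \<times> real \<Rightarrow> 'a list \<times> real)) \<Rightarrow> bool" where
  "aut_plot A k U P \<longleftrightarrow> openin (Rn_top k) U \<and> P ` U \<subseteq> AutT A \<and>
     (\<forall>m W F Q. openin (Rn_top m) W \<and> smooth_map m W k U F \<and> wire_plot A m W Q
        \<longrightarrow> wire_plot A m W (\<lambda>w. P (F w) (Q w)))"

end

theory Submission
  imports Defs
begin


lemma openin_Rn_self: "openin (Rn_top n) (Rn n)"
  by (simp add: Rn_top_def)

lemma D0_diffeology: "is_diffeology X (\<lambda>n U P. openin (Rn_top n) U \<and> P ` U \<subseteq> X)"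
  unfolding is_diffeology_def smooth_map_def by (auto simp: image_subset_iff)

lemma gen_plotI: "(\<And>D. is_diffeology X D \<Longrightarrow> (\<forall>g\<in>G. D 1 (Rn 1) (\<lambda>x. g (x 0))) \<Longrightarrow> D n U P) \<Longrightarrow> gen_plot X G n U P"
  unfolding gen_plot_def by blast
lemma gen_plotD: "gen_plot X G n U P \<Longrightarrow> is_diffeology X D \<Longrightarrow> (\<forall>g\<in>G. D 1 (Rn 1) (\<lambda>x. g (x 0))) \<Longrightarrow> D n U P"
  unfolding gen_plot_def by blast

lemma gen_plot_base:
  assumes "gen_plot X G n U P" "\<forall>g\<in>G. range g \<subseteq> X"
  shows "openin (Rn_top n) U \<and> P ` U \<subseteq> X"
proof -
  have "\<forall>g\<in>G. openin (Rn_top 1) (Rn 1) \<and> (\<lambda>x. g (x 0)) ` Rn 1 \<subseteq> X"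
    using assms(2) openin_Rn_self by (auto simp: image_subset_iff)
  then have "(\<lambda>n U P. openin (Rn_top n) U \<and> P ` U \<subseteq> X) n U P"
    by (rule gen_plotD[OF assms(1) D0_diffeology])
  then show ?thesis by simp
qed

lemma diff_base: assumes "is_diffeology X D" "D n U P" shows "openin (Rn_top n) U \<and> P ` U \<subseteq> X"
proof -
  have "\<forall>n U P. D n U P \<longrightarrow> openin (Rn_top n) U \<and> P ` U \<subseteq> X"
    using assms(1) unfolding is_diffeology_def by (elim conjE) assumption
  then show ?thesis using assms(2) by blast
qed
lemma diff_ext: assumes "is_diffeology X D" "D n U P" "\<And>u. u\<in>U \<Longrightarrow> Q u = P u" shows "D n U Q"
proof -
  have "\<forall>n U P Q. D n U P \<and> (\<forall>u\<in>U. Q u = P u) \<longrightarrow> D n U Q"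
    using assms(1) unfolding is_diffeology_def by (elim conjE) assumption
  then show ?thesis using assms(2,3) by blast
qed
lemma diff_const: assumes "is_diffeology X D" "openin (Rn_top n) U" "x \<in> X" shows "D n U (\<lambda>_. x)"
proof -
  have "\<forall>n U x. openin (Rn_top n) U \<and> x \<in> X \<longrightarrow> D n U (\<lambda>_. x)"
    using assms(1) unfolding is_diffeology_def by (elim conjE) assumption
  then show ?thesis using assms(2,3) by blast
qed
lemma diff_comp: assumes "is_diffeology X D" "D n U P" "openin (Rn_top m) V" "smooth_map m V n U F" shows "D m V (P \<circ> F)"
proof -
  have "\<forall>n U P m V F. D n U P \<and> openin (Rn_top m) V \<and> smooth_map m V n U F \<longrightarrow> D m V (P \<circ> F)"
    using assms(1) unfolding is_diffeology_def by (elim conjE) assumption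
  then show ?thesis using assms(2,3,4) by blast
qed
lemma diff_sheaf: assumes "is_diffeology X D" "openin (Rn_top n) U" "P ` U \<subseteq> X"
    "\<And>u. u\<in>U \<Longrightarrow> \<exists>V. openin (Rn_top n) V \<and> u \<in> V \<and> V \<subseteq> U \<and> D n V P" shows "D n U P"
proof -
  have "\<forall>n U P. openin (Rn_top n) U \<and> P ` U \<subseteq> X \<and>
         (\<forall>u\<in>U. \<exists>V. openin (Rn_top n) V \<and> u \<in> V \<and> V \<subseteq> U \<and> D n V P) \<longrightarrow> D n U P"
    using assms(1) unfolding is_diffeology_def by (elim conjE) assumption
  then show ?thesis using assms(2,3,4) by blast
qed

lemma gen_plot_diffeology:
  assumes G: "\<forall>g\<in>G. range g \<subseteq> X"
  shows "is_diffeology X (gen_plot X G)"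
  unfolding is_diffeology_def
  apply (intro conjI allI impI)
  subgoal by (drule gen_plot_base[OF _ G]) (erule conjunct1)
  subgoal by (drule gen_plot_base[OF _ G]) (erule conjunct2)
  subgoal for n U P Q
    apply (rule gen_plotI)
    subgoal for D by (rule diff_ext[of X D n U P Q]) (auto dest: gen_plotD)
    done
  subgoal for n U x
    apply (rule gen_plotI)
    subgoal for D by (rule diff_const[of X D n U x]) simp_all
    done
  subgoal for n U P m V F
    apply (rule gen_plotI)
    subgoal for D by (rule diff_comp[of X D n U P m V F]) (auto dest: gen_plotD)
    done
  subgoal for n U P
  proof (rule gen_plotI)
    fix D assume d: "is_diffeology X D" "\<forall>g\<in>G. D 1 (Rn 1) (\<lambda>x. g (x 0))"
    assume a: "openin (Rn_top n) U \<and> P ` U \<subseteq> X \<and>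
         (\<forall>u\<in>U. \<exists>V. openin (Rn_top n) V \<and> u \<in> V \<and> V \<subseteq> U \<and> gen_plot X G n V P)"
    show "D n U P"
      apply (rule diff_sheaf[OF d(1)])
      using a apply blast
      using a apply blast
      using a gen_plotD[OF _ d] by blast
  qed
  done



lemma smooth_fun_cont: "smooth_fun m W g \<Longrightarrow> continuous_on W g"
  unfolding smooth_fun_def
proof (elim exE conjE)
  fix D assume "\<forall>x\<in>W. D [] x = g x" "\<forall>vs\<in>lists {..<m}. continuous_on W (D vs)"
  moreover have "[] \<in> lists {..<m}" by simp
  ultimately have "continuous_on W (D [])" by blast
  then show "continuous_on W g" using continuous_on_cong \<open>\<forall>x\<in>W. D [] x = g x\<close> by metis
qed

lemma Rn_top_subset: "openin (Rn_top n) U \<Longrightarrow> U \<subseteq> Rn n"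
  unfolding Rn_top_def by (meson openin_imp_subset)

lemma smooth_map_cont:
  assumes "smooth_map m V n U F" "openin (Rn_top n) U"
  shows "continuous_on V F"
proof (rule continuous_on_coordinatewise_then_product)
  fix i show "continuous_on V (\<lambda>x. F x i)"
  proof (cases "i < n")
    case True then show ?thesis using assms(1) smooth_fun_cont unfolding smooth_map_def by blast
  next
    case False
    have "\<forall>x\<in>V. F x i = 0"
    proof
      fix x assume "x \<in> V"
      then have "F x \<in> U" using assms(1) unfolding smooth_map_def by blast
      then have "F x \<in> Rn n" using Rn_top_subset[OF assms(2)] by blast
      then show "F x i = 0" using False unfolding Rn_def by simp
    qed
    then show ?thesis using continuous_on_cong continuous_on_const by (metis (no_types, lifting))
  qed
qed

lemma openin_Rn_top_preimage:
  assumes "openin (Rn_top m) V" "continuous_on V F" "F ` V \<subseteq> U" "openin (Rn_top n) Ob" "Ob \<subseteq> U"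
     "openin (Rn_top n) U"
  shows "openin (Rn_top m) {v\<in>V. F v \<in> Ob}"
proof -
  obtain T where T: "open T" "Ob = Rn n \<inter> T" using assms(4) unfolding Rn_top_def openin_open by blast
  have e: "{v\<in>V. F v \<in> Ob} = V \<inter> F -` T" using assms(3) Rn_top_subset[OF assms(6)] T by auto
  have "openin (top_of_set V) (V \<inter> F -` T)" by (rule continuous_openin_preimage_gen[OF assms(2) T(1)])
  then show ?thesis using assms(1) unfolding e Rn_top_def using openin_trans by blast
qed

definition cplot :: "'a set \<Rightarrow> nat \<Rightarrow> (nat \<Rightarrow> real) set \<Rightarrow> ((nat \<Rightarrow> real) \<Rightarrow> 'a list \<times> real) \<Rightarrow> bool" where
  "cplot A n U R \<longleftrightarrow> openin (Rn_top n) U \<and> R ` U \<subseteq> Tpts A \<and>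
     (\<forall>S. T_open A S \<longrightarrow> openin (Rn_top n) {u\<in>U. R u \<in> S})"

lemma cplot_diffeology: "is_diffeology (Tpts A) (cplot A)"
  unfolding is_diffeology_def
  apply (intro conjI allI impI)
  subgoal unfolding cplot_def by blast
  subgoal unfolding cplot_def by blast
  subgoal for n U P Q
  proof -
    assume a: "cplot A n U P \<and> (\<forall>u\<in>U. Q u = P u)"
    have "\<And>S. {u\<in>U. Q u \<in> S} = {u\<in>U. P u \<in> S}" using a by auto
    then show ?thesis using a unfolding cplot_def by auto
  qed
  subgoal for n U x
  proof -
    assume a: "openin (Rn_top n) U \<and> x \<in> Tpts A"
    have "\<And>S. {u\<in>U. x \<in> S} = (if x \<in> S then U else {})" by auto
    then show ?thesis using a unfolding cplot_def by auto
  qed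
  subgoal for n U P m V F
  proof -
    assume a: "cplot A n U P \<and> openin (Rn_top m) V \<and> smooth_map m V n U F"
    have c: "continuous_on V F" using a smooth_map_cont unfolding cplot_def by blast
    have FV: "F ` V \<subseteq> U" using a unfolding smooth_map_def by blast
    show ?thesis unfolding cplot_def
    proof (intro conjI allI impI)
      show "openin (Rn_top m) V" using a by blast
      show "(P \<circ> F) ` V \<subseteq> Tpts A" using a FV unfolding cplot_def by auto
      fix S assume S: "T_open A S"
      have "{v\<in>V. (P \<circ> F) v \<in> S} = {v\<in>V. F v \<in> {u\<in>U. P u \<in> S}}" using FV by auto
      moreover have "openin (Rn_top m) {v\<in>V. F v \<in> {u\<in>U. P u \<in> S}}"
        apply (rule openin_Rn_top_preimage[OF _ c FV])
        using a S unfolding cplot_def by auto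
      ultimately show "openin (Rn_top m) {v\<in>V. (P \<circ> F) v \<in> S}" by simp
    qed
  qed
  subgoal for n U P
  proof -
    assume a: "openin (Rn_top n) U \<and> P ` U \<subseteq> Tpts A \<and>
       (\<forall>u\<in>U. \<exists>V. openin (Rn_top n) V \<and> u \<in> V \<and> V \<subseteq> U \<and> cplot A n V P)"
    then obtain Vf where Vf: "\<And>u. u\<in>U \<Longrightarrow> openin (Rn_top n) (Vf u) \<and> u \<in> Vf u \<and> Vf u \<subseteq> U \<and> cplot A n (Vf u) P"
      by metis
    show ?thesis unfolding cplot_def
    proof (intro conjI allI impI)
      show "openin (Rn_top n) U" "P ` U \<subseteq> Tpts A" using a by auto
      fix S assume S: "T_open A S"
      have "{u\<in>U. P u \<in> S} = (\<Union>u\<in>U. {v\<in>Vf u. P v \<in> S})" using Vf by blast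
      moreover have "openin (Rn_top n) (\<Union>u\<in>U. {v\<in>Vf u. P v \<in> S})"
        using Vf S unfolding cplot_def by (intro openin_Union) auto
      ultimately show "openin (Rn_top n) {u\<in>U. P u \<in> S}" by simp
    qed
  qed
  done

lemma openin_T_top: "openin (T_top A) S = T_open A S"
  unfolding T_top_def by (simp add: istopology_T_open topology_inverse')

lemma wire_cplot: assumes g: "g \<in> wires A" shows "cplot A 1 (Rn 1) (\<lambda>x. g (x 0))"
proof -
  have cm: "continuous_map euclideanreal (T_top A) g" and rg: "range g \<subseteq> Tpts A"
    using g unfolding wires_def by auto
  have "openin (Rn_top 1) {x\<in>Rn 1. g (x 0) \<in> S}" if S: "T_open A S" for S
  proof -
    have "openin (T_top A) S" using S by (simp add: openin_T_top)
    then have "openin euclideanreal {x \<in> topspace euclideanreal. g x \<in> S}"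
      using cm unfolding continuous_map_def by blast
    then have o: "open {x. g x \<in> S}" by simp
    have c: "continuous_on (Rn 1) (\<lambda>x. x 0)"
      by (rule continuous_on_subset[OF continuous_on_product_coordinates]) simp
    have "openin (top_of_set (Rn 1)) (Rn 1 \<inter> (\<lambda>x. x 0) -` {x. g x \<in> S})"
      by (rule continuous_openin_preimage_gen[OF c o])
    moreover have "Rn 1 \<inter> (\<lambda>x. x 0) -` {x. g x \<in> S} = {x\<in>Rn 1. g (x 0) \<in> S}" by auto
    ultimately show ?thesis unfolding Rn_top_def by simp
  qed
  moreover have "(\<lambda>x. g (x 0)) ` Rn 1 \<subseteq> Tpts A" using rg by auto
  ultimately show ?thesis unfolding cplot_def using openin_Rn_self by blast
qed


lemma wires_range: "\<forall>g\<in>wires A. range g \<subseteq> Tpts A"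
  unfolding wires_def by blast

lemma wire_plot_cplot: "wire_plot A n U R \<Longrightarrow> cplot A n U R"
  apply (erule gen_plotD[OF _ cplot_diffeology])
  apply (rule ballI)
  apply (erule wire_cplot)
  done



lemma smooth_fun_coord: "smooth_fun m W (\<lambda>x. x i)"
  unfolding smooth_fun_def
proof (intro exI[of _ "\<lambda>vs x. if vs = [] then x i else if vs = [i] then 1 else 0"] conjI ballI allI impI)
  fix x :: "nat \<Rightarrow> real" assume "x \<in> W" then show "(if [] = [] then x i else if [] = [i] then 1 else 0) = x i" by simp
next
  fix vs :: "nat list"
  show "continuous_on W (\<lambda>x. if vs = [] then x i else if vs = [i] then 1 else (0::real))"
    by (cases "vs = []") (auto intro: continuous_on_subset[OF continuous_on_product_coordinates])
next
  fix vs :: "nat list" and j x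
  show "((\<lambda>t. if vs = [] then (x(j := x j + t)) i else if vs = [i] then 1 else 0) has_real_derivative
         (if j # vs = [] then x i else if j # vs = [i] then 1 else 0)) (at 0)"
  proof (cases "vs = []")
    case True
    show ?thesis
    proof (cases "j = i")
      case True
      then show ?thesis using \<open>vs = []\<close> by (auto intro!: derivative_eq_intros)
    next
      case False
      then show ?thesis using \<open>vs = []\<close> by (auto intro!: derivative_eq_intros)
    qed
  next
    case False
    then show ?thesis by (auto intro!: derivative_eq_intros)
  qed
qed

lemma smooth_map_id: "W' \<subseteq> W \<Longrightarrow> smooth_map m W' m W id"
  unfolding smooth_map_def using smooth_fun_coord by auto



lemma butlast_lists: "w \<in> lists A \<Longrightarrow> butlast w \<in> lists A"
  by (auto dest: in_set_butlastD)

lemma Tpts_vertex: "v \<in> lists A \<Longrightarrow> (v, 1) \<in> Tpts A"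
  unfolding Tpts_def by blast

lemma Tpts_fst: "p \<in> Tpts A \<Longrightarrow> fst p \<in> lists A"
  unfolding Tpts_def by auto

lemma Tpts_edge: "w \<in> lists A \<Longrightarrow> w \<noteq> [] \<Longrightarrow> 0 \<le> t \<Longrightarrow> t \<le> 1 \<Longrightarrow> edge_map w t \<in> Tpts A"
  unfolding edge_map_def Tpts_def using butlast_lists[of w A] by force

definition St :: "'a set \<Rightarrow> 'a list \<Rightarrow> ('a list \<times> real) set" where
  "St A v = {p \<in> Tpts A. fst p = v \<or> (snd p < 1 \<and> fst p \<noteq> [] \<and> butlast (fst p) = v)}"

lemma T_open_St: "T_open A (St A v)"
  unfolding T_open_def
proof (intro conjI ballI)
  show "St A v \<subseteq> Tpts A" unfolding St_def by blast
  fix w assume w: "w \<in> lists A - {[]}"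
  have E: "edge_map w t \<in> Tpts A" if "t \<in> {0..1}" for t using w that Tpts_edge[of w A t] by auto
  consider "w = v" | "w \<noteq> v" "butlast w = v" | "w \<noteq> v" "butlast w \<noteq> v" by blast
  then show "openin (top_of_set {0..1::real}) {t\<in>{0..1}. edge_map w t \<in> St A v}"
  proof cases
    case 1
    have "{t\<in>{0..1::real}. edge_map w t \<in> St A v} = {0..1} \<inter> {0<..}"
    proof (intro set_eqI iffI)
      fix t assume t: "t \<in> {t\<in>{0..1::real}. edge_map w t \<in> St A v}"
      have "t \<noteq> 0"
      proof
        assume "t = 0"
        then have "edge_map w t = (butlast w, 1)" unfolding edge_map_def by simp
        moreover have "length (butlast w) \<noteq> length w" using w by (cases w) auto
        then have "butlast w \<noteq> w" by metis
        ultimately show False using t 1 unfolding St_def by auto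
      qed
      then show "t \<in> {0..1} \<inter> {0<..}" using t by auto
    next
      fix t assume t: "t \<in> {0..1::real} \<inter> {0<..}"
      then have "edge_map w t = (w, t)" unfolding edge_map_def by auto
      then show "t \<in> {t\<in>{0..1::real}. edge_map w t \<in> St A v}" using t E[of t] 1 unfolding St_def by auto
    qed
    then show ?thesis using openin_open_Int[OF open_greaterThan] by metis
  next
    case 2
    have "{t\<in>{0..1::real}. edge_map w t \<in> St A v} = {0..1} \<inter> {..<1}"
    proof (intro set_eqI iffI)
      fix t assume t: "t \<in> {t\<in>{0..1::real}. edge_map w t \<in> St A v}"
      have "t \<noteq> 1"
      proof
        assume "t = 1"
        then have "edge_map w t = (w, 1)" unfolding edge_map_def by simp
        then show False using t 2 unfolding St_def by auto
      qed
      then show "t \<in> {0..1} \<inter> {..<1}" using t by auto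
    next
      fix t assume t: "t \<in> {0..1::real} \<inter> {..<1}"
      show "t \<in> {t\<in>{0..1::real}. edge_map w t \<in> St A v}"
      proof (cases "t = 0")
        case True
        then show ?thesis using E[of t] t 2 unfolding St_def edge_map_def by auto
      next
        case False
        then show ?thesis using E[of t] t 2 w unfolding St_def edge_map_def by auto
      qed
    qed
    then show ?thesis using openin_open_Int[OF open_lessThan] by metis
  next
    case 3
    have "{t\<in>{0..1::real}. edge_map w t \<in> St A v} = {}"
    proof -
      have "edge_map w t \<notin> St A v" for t
        using 3 unfolding St_def edge_map_def by (cases "t = 0") simp_all
      then show ?thesis by blast
    qed
    then show ?thesis by (metis openin_empty)
  qed
qed

lemma vertex_in_St: "(x, 1) \<in> St A w \<longleftrightarrow> (x, 1) \<in> Tpts A \<and> x = w"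
  unfolding St_def by auto



lemma aut_vertex:
  assumes "is_tree_aut A g" "v \<in> lists A"
  shows "realize A g (v, 1) = (g v, 1)" "g v \<in> lists A"
proof -
  show "g v \<in> lists A" using assms(1) unfolding is_tree_aut_def
    using bij_betw_apply[of g "lists A" "lists A" v] assms(2) by blast
  show "realize A g (v, 1) = (g v, 1)" using Tpts_vertex[OF assms(2)] unfolding realize_def by simp
qed

lemma forward:
  assumes ap: "aut_plot A k U P"
  shows "discrete_plot (AutT A) k U P"
proof -
  have U: "openin (Rn_top k) U" and PU: "P ` U \<subseteq> AutT A" using ap unfolding aut_plot_def by auto
  have rep: "\<exists>g. is_tree_aut A g \<and> P u = realize A g" if "u \<in> U" for u
    using PU that unfolding AutT_def by auto
  have vert: "P u (v, 1) = (fst (P u (v, 1)), 1) \<and> fst (P u (v, 1)) \<in> lists A"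
    if uv: "u \<in> U" "v \<in> lists A" for u v
  proof -
    obtain g where g: "is_tree_aut A g" "P u = realize A g" using rep[OF uv(1)] by blast
    show ?thesis using aut_vertex[OF g(1) uv(2)] g(2) by simp
  qed
  have form: "P u p = (if p \<in> Tpts A then (fst (P u (fst p, 1)), snd p) else p)"
    if u: "u \<in> U" for u p
  proof -
    obtain g where g: "is_tree_aut A g" "P u = realize A g" using rep[OF u] by blast
    show ?thesis
    proof (cases "p \<in> Tpts A")
      case True
      then have "fst p \<in> lists A" by (rule Tpts_fst)
      then show ?thesis using aut_vertex[OF g(1)] g(2) True unfolding realize_def by simp
    next
      case False then show ?thesis using g(2) unfolding realize_def by simp
    qed
  qed
  have WD: "is_diffeology (Tpts A) (wire_plot A)" by (rule gen_plot_diffeology[OF wires_range])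
  have cp: "cplot A k U (\<lambda>u. P u (v, 1))" if v: "v \<in> lists A" for v
  proof -
    have Q: "wire_plot A k U (\<lambda>_. (v, 1))" by (rule diff_const[OF WD U Tpts_vertex[OF v]])
    have "smooth_map k U k U id" by (rule smooth_map_id) simp
    then have "wire_plot A k U (\<lambda>w. P (id w) ((\<lambda>_. (v, 1)) w))"
      using ap Q U unfolding aut_plot_def by blast
    then have "wire_plot A k U (\<lambda>u. P u (v, 1))" by simp
    then show ?thesis by (rule wire_plot_cplot)
  qed
  have lvl: "openin (Rn_top k) {u\<in>U. fst (P u (v, 1)) = w}" if v: "v \<in> lists A" for v w
  proof (cases "w \<in> lists A")
    case True
    have "{u\<in>U. fst (P u (v, 1)) = w} = {u\<in>U. P u (v, 1) \<in> St A w}"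
    proof (intro set_eqI iffI)
      fix u assume "u \<in> {u\<in>U. fst (P u (v, 1)) = w}"
      then show "u \<in> {u\<in>U. P u (v, 1) \<in> St A w}" using vert[OF _ v] vertex_in_St Tpts_vertex
        by (metis (mono_tags, lifting) mem_Collect_eq)
    next
      fix u assume "u \<in> {u\<in>U. P u (v, 1) \<in> St A w}"
      then show "u \<in> {u\<in>U. fst (P u (v, 1)) = w}" using vert[OF _ v] vertex_in_St
        by (metis (mono_tags, lifting) mem_Collect_eq)
    qed
    moreover have "openin (Rn_top k) {u\<in>U. P u (v, 1) \<in> St A w}"
      using cp[OF v] T_open_St unfolding cplot_def by blast
    ultimately show ?thesis by simp
  next
    case False
    then have "{u\<in>U. fst (P u (v, 1)) = w} = {}" using vert[OF _ v] by auto
    then show ?thesis by (metis openin_empty)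
  qed
  show ?thesis unfolding discrete_plot_def
  proof (intro conjI ballI)
    show "openin (Rn_top k) U" by (rule U)
    show "P ` U \<subseteq> AutT A" by (rule PU)
    fix u0 assume u0: "u0 \<in> U"
    obtain T' where T': "open T'" "U = Rn k \<inter> T'" using U unfolding Rn_top_def openin_open by blast
    have "openin (product_topology (\<lambda>i. euclidean) UNIV) T'" using T'(1) by (simp add: open_fun_def)
    moreover have "u0 \<in> T'" using u0 T' by blast
    ultimately obtain Uf where Uf: "finite {i \<in> UNIV. Uf i \<noteq> topspace euclidean}"
       "\<forall>i \<in> UNIV. openin euclidean (Uf i)" "u0 \<in> Pi\<^sub>E UNIV Uf" "Pi\<^sub>E UNIV Uf \<subseteq> T'"
      unfolding openin_product_topology_alt by blast
    have "\<exists>e>0. ball (u0 i) e \<subseteq> Uf i" for i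
    proof -
      have "open (Uf i)" using Uf(2) by simp
      moreover have "u0 i \<in> Uf i" using Uf(3) by (simp add: PiE_iff)
      ultimately show ?thesis by (meson openE)
    qed
    then obtain e where e: "\<And>i. e i > 0" "\<And>i. ball (u0 i) (e i) \<subseteq> Uf i" by metis
    define J where "J = {i. Uf i \<noteq> UNIV}"
    have J: "finite J" using Uf(1) unfolding J_def by simp
    define B where "B = {f. \<forall>i\<in>J. f i \<in> ball (u0 i) (e i)}"
    have oB: "open B" unfolding B_def
      using product_topology_basis'[OF J, of "\<lambda>i. ball (u0 i) (e i)" "\<lambda>i. i"] by simp
    have BT: "B \<subseteq> T'"
    proof
      fix f assume "f \<in> B"
      then have fi: "f i \<in> Uf i" for i
      proof (cases "Uf i = UNIV")
        case False
        then have "f i \<in> ball (u0 i) (e i)" using \<open>f \<in> B\<close> unfolding B_def J_def by blast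
        then show ?thesis using e(2)[of i] by blast
      qed simp
      have "f \<in> Pi\<^sub>E UNIV Uf" using fi by (simp add: PiE_iff)
      then show "f \<in> T'" using Uf(4) by blast
    qed
    define V where "V = Rn k \<inter> B"
    have oV: "openin (Rn_top k) V" unfolding V_def Rn_top_def using oB by blast
    have u0V: "u0 \<in> V" using u0 T' e(1) unfolding V_def B_def by auto
    have VU: "V \<subseteq> U" using BT T' unfolding V_def by blast
    have const: "P u = P u0" if u: "u \<in> V" for u
    proof -
      define \<gamma> where "\<gamma> t = (\<lambda>i. u0 i + t * (u i - u0 i))" for t :: real
      have \<gamma>V: "\<gamma> t \<in> V" if t: "t \<in> {0..1}" for t
      proof -
        have "\<gamma> t \<in> Rn k" using u u0V unfolding V_def Rn_def \<gamma>_def by auto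
        moreover have "\<gamma> t \<in> B" unfolding B_def
        proof (intro CollectI ballI)
          fix i assume i: "i \<in> J"
          have "dist (u0 i) (\<gamma> t i) = \<bar>t\<bar> * \<bar>u i - u0 i\<bar>" unfolding \<gamma>_def dist_real_def
            by (simp add: abs_mult)
          also have "\<dots> \<le> \<bar>u i - u0 i\<bar>" using t by (intro mult_left_le_one_le) auto
          also have "\<dots> < e i" using u i unfolding V_def B_def by (simp add: dist_real_def abs_minus_commute)
          finally show "\<gamma> t i \<in> ball (u0 i) (e i)" by simp
        qed
        ultimately show ?thesis unfolding V_def by blast
      qed
      have c\<gamma>: "continuous_on {0..1} \<gamma>" unfolding \<gamma>_def
        by (intro continuous_on_coordinatewise_then_product continuous_intros)
      have \<gamma>01: "\<gamma> 0 = u0" "\<gamma> 1 = u" unfolding \<gamma>_def by auto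
      have eqv: "fst (P u (v, 1)) = fst (P u0 (v, 1))" if v: "v \<in> lists A" for v
      proof -
        define h where "h t = fst (P (\<gamma> t) (v, 1))" for t
        have lv: "openin (top_of_set {0..1}) {t\<in>{0..1}. h t = w}" for w
        proof -
          obtain Tw where Tw: "open Tw" "{u\<in>U. fst (P u (v, 1)) = w} = Rn k \<inter> Tw"
            using lvl[OF v, of w] unfolding Rn_top_def openin_open by blast
          have "{t\<in>{0..1}. h t = w} = {0..1} \<inter> \<gamma> -` Tw"
          proof (intro set_eqI iffI)
            fix t assume t: "t \<in> {t\<in>{0..1}. h t = w}"
            then have "\<gamma> t \<in> {u\<in>U. fst (P u (v, 1)) = w}" using \<gamma>V VU unfolding h_def by auto
            then show "t \<in> {0..1} \<inter> \<gamma> -` Tw" using t Tw(2) by auto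
          next
            fix t assume t: "t \<in> {0..1} \<inter> \<gamma> -` Tw"
            then have "\<gamma> t \<in> Rn k \<inter> Tw" using \<gamma>V unfolding V_def by auto
            then show "t \<in> {t\<in>{0..1}. h t = w}" using t Tw(2) unfolding h_def by auto
          qed
          then show ?thesis using continuous_openin_preimage_gen[OF c\<gamma> Tw(1)] by simp
        qed
        define S0 where "S0 = {t\<in>{0..1::real}. h t = h 0}"
        have "openin (top_of_set {0..1}) S0" unfolding S0_def by (rule lv)
        moreover have "closedin (top_of_set {0..1}) S0"
        proof -
          have eq: "{0..1} - S0 = \<Union> ((\<lambda>w. {t\<in>{0..1}. h t = w}) ` {w. w \<noteq> h 0})"
            unfolding S0_def by blast
          have "openin (top_of_set {0..1}) (\<Union> ((\<lambda>w. {t\<in>{0..1}. h t = w}) ` {w. w \<noteq> h 0}))"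
          proof (rule openin_Union)
            fix S assume "S \<in> (\<lambda>w. {t\<in>{0..1}. h t = w}) ` {w. w \<noteq> h 0}"
            then obtain w where "S = {t\<in>{0..1}. h t = w}" by blast
            then show "openin (top_of_set {0..1}) S" using lv[of w] by simp
          qed
          then have "openin (top_of_set {0..1}) ({0..1} - S0)" by (simp only: eq)
          moreover have "S0 \<subseteq> {0..1}" unfolding S0_def by blast
          ultimately show ?thesis unfolding closedin_def topspace_euclidean_subtopology by blast
        qed
        moreover have "(0::real) \<in> S0" unfolding S0_def by simp
        moreover have "\<forall>T. openin (top_of_set {0..1::real}) T \<and> closedin (top_of_set {0..1}) T \<longrightarrow> T = {} \<or> T = {0..1}"
          using connected_clopen[THEN iffD1, OF connected_Icc[of "0::real" 1]] .
        ultimately have "S0 = {0..1}" by blast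
        then have "(1::real) \<in> S0" by simp
        then have "h 1 = h 0" unfolding S0_def by (simp only: mem_Collect_eq)
        then show ?thesis unfolding h_def \<gamma>01 .
      qed
      show "P u = P u0"
      proof
        fix p
        have uU: "u \<in> U" using u VU by blast
        show "P u p = P u0 p"
        proof (cases "p \<in> Tpts A")
          case True
          then have "fst (P u (fst p, 1)) = fst (P u0 (fst p, 1))" using eqv[OF Tpts_fst[OF True]] by simp
          then show ?thesis using form[OF uU, of p] form[OF u0, of p] True by simp
        next
          case False
          then show ?thesis using form[OF uU, of p] form[OF u0, of p] by simp
        qed
      qed
    qed
    show "\<exists>V. openin (Rn_top k) V \<and> u0 \<in> V \<and> V \<subseteq> U \<and> (\<forall>v\<in>V. P v = P u0)"
      using oV u0V VU const by blast
  qed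
qed



lemma aut_adj:
  assumes h: "is_tree_aut A h" and v: "v \<in> lists A" and a: "a \<in> A"
  shows "(\<exists>b\<in>A. h (v @ [a]) = h v @ [b]) \<or> (\<exists>b\<in>A. h v = h (v @ [a]) @ [b])"
proof -
  have va: "v @ [a] \<in> lists A" using v a by simp
  have "tree_adj A v (v @ [a])" unfolding tree_adj_def using a by blast
  then have "tree_adj A (h v) (h (v @ [a]))" using h v va unfolding is_tree_aut_def by blast
  then show ?thesis unfolding tree_adj_def by blast
qed

lemma aut_lists: "is_tree_aut A h \<Longrightarrow> w \<in> lists A \<Longrightarrow> h w \<in> lists A"
  unfolding is_tree_aut_def using bij_betw_apply[of h "lists A" "lists A" w] by (elim conjE) simp

lemma aut_inj: "is_tree_aut A h \<Longrightarrow> inj_on h (lists A)"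
  unfolding is_tree_aut_def by (elim conjE) (rule bij_betw_imp_inj_on)

lemma aut_len:
  assumes h: "is_tree_aut A h"
  shows "w \<in> lists A \<Longrightarrow> length (h w) = length w"
proof (induction "length w" arbitrary: w rule: less_induct)
  case less
  show ?case
  proof (cases w rule: rev_cases)
    case Nil
    then show ?thesis using h unfolding is_tree_aut_def by simp
  next
    case (snoc v a)
    have v: "v \<in> lists A" and a: "a \<in> A" using less.prems snoc by auto
    have IHv: "length (h v) = length v" using less.hyps[of v] v snoc by simp
    from aut_adj[OF h v a] show ?thesis
    proof
      assume "\<exists>b\<in>A. h (v @ [a]) = h v @ [b]"
      then show ?thesis using IHv snoc by auto
    next
      assume "\<exists>b\<in>A. h v = h (v @ [a]) @ [b]"
      then obtain b where b: "h v = h (v @ [a]) @ [b]" by blast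
      show ?thesis
      proof (cases v rule: rev_cases)
        case Nil
        then show ?thesis using b h unfolding is_tree_aut_def by simp
      next
        case (snoc v' c)
        have v': "v' \<in> lists A" and c: "c \<in> A" using v snoc by auto
        have IHv': "length (h v') = length v'" using less.hyps[of v'] v' snoc \<open>w = v @ [a]\<close> by simp
        from aut_adj[OF h v' c] show ?thesis
        proof
          assume "\<exists>d\<in>A. h (v' @ [c]) = h v' @ [d]"
          then obtain d where d: "h v = h v' @ [d]" using snoc by blast
          then have "h v' = h (v @ [a])" using b by (metis butlast_snoc)
          moreover have "v @ [a] \<in> lists A" using v a by simp
          ultimately have "v' = v @ [a]" using aut_inj[OF h] v' by (meson inj_onD)
          then show ?thesis using snoc by simp
        next
          assume "\<exists>d\<in>A. h v' = h (v' @ [c]) @ [d]"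
          then obtain d where "h v' = h v @ [d]" using snoc by blast
          then have "length (h v') = length (h v) + 1" by simp
          then show ?thesis using IHv IHv' snoc by simp
        qed
      qed
    qed
  qed
qed

lemma aut_parent:
  assumes h: "is_tree_aut A h" and w: "w \<in> lists A" "w \<noteq> []"
  shows "h w \<noteq> [] \<and> butlast (h w) = h (butlast w)"
proof -
  obtain v a where wa: "w = v @ [a]" using w(2) by (metis rev_exhaust)
  have v: "v \<in> lists A" and a: "a \<in> A" using w wa by auto
  have L1: "length (h w) = length w" using aut_len[OF h w(1)] .
  have L2: "length (h v) = length v" using aut_len[OF h v] .
  from aut_adj[OF h v a] have "\<exists>b\<in>A. h w = h v @ [b]"
  proof
    assume "\<exists>b\<in>A. h v = h (v @ [a]) @ [b]"
    then obtain b where "h v = h w @ [b]" using wa by blast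
    then have "length (h v) = length (h w) + 1" by simp
    then show ?thesis using L1 L2 wa by simp
  qed (use wa in simp)
  then show ?thesis using wa by auto
qed

lemma aut_inv:
  assumes h: "is_tree_aut A h"
  shows "is_tree_aut A (inv_into (lists A) h)"
proof -
  have hh: "bij_betw h (lists A) (lists A) \<and> h [] = [] \<and>
     (\<forall>u\<in>lists A. \<forall>v\<in>lists A. tree_adj A u v \<longleftrightarrow> tree_adj A (h u) (h v))"
    using h unfolding is_tree_aut_def .
  have b: "bij_betw h (lists A) (lists A)" using hh by (rule conjunct1)
  have h0: "h [] = []" using hh by (simp only:)
  have adj: "\<forall>u\<in>lists A. \<forall>v\<in>lists A. tree_adj A u v \<longleftrightarrow> tree_adj A (h u) (h v)"
    using hh by (elim conjE)
  let ?g = "inv_into (lists A) h"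
  have gb: "bij_betw ?g (lists A) (lists A)" by (rule bij_betw_inv_into[OF b])
  have "?g [] = []" using inv_into_f_eq[OF bij_betw_imp_inj_on[OF b], of "[]" "[]"] h0 by simp
  moreover have "tree_adj A u v \<longleftrightarrow> tree_adj A (?g u) (?g v)" if u: "u \<in> lists A" and v: "v \<in> lists A" for u v
  proof -
    have gu: "?g u \<in> lists A" by (rule bij_betw_apply[OF gb u])
    have gv: "?g v \<in> lists A" by (rule bij_betw_apply[OF gb v])
    have e: "h (?g u) = u" "h (?g v) = v" using b u v by (simp_all add: bij_betw_inv_into_right)
    have "tree_adj A (?g u) (?g v) \<longleftrightarrow> tree_adj A (h (?g u)) (h (?g v))"
      by (rule adj[rule_format, OF gu gv])
    then show ?thesis unfolding e by simp
  qed
  ultimately show ?thesis unfolding is_tree_aut_def using gb by blast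
qed

lemma topspace_T_top: "topspace (T_top A) = Tpts A"
proof -
  have "T_open A (Tpts A)" unfolding T_open_def
  proof (intro conjI ballI)
    fix w assume w: "w \<in> lists A - {[]}"
    have "{t\<in>{0..1::real}. edge_map w t \<in> Tpts A} = {0..1}" using w Tpts_edge by fastforce
    then show "openin (top_of_set {0..1::real}) {t\<in>{0..1}. edge_map w t \<in> Tpts A}" by simp
  qed simp
  then show ?thesis unfolding topspace_def openin_T_top T_open_def by blast
qed

lemma realize_Tpts: "is_tree_aut A h \<Longrightarrow> p \<in> Tpts A \<Longrightarrow> realize A h p \<in> Tpts A"
proof -
  assume h: "is_tree_aut A h" and p: "p \<in> Tpts A"
  obtain w s where ws: "p = (w, s)" by (cases p)
  have w: "w \<in> lists A" using Tpts_fst[OF p] ws by simp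
  have hw: "h w \<in> lists A" using aut_lists[OF h w] .
  have r: "realize A h p = (h w, s)" using p ws unfolding realize_def by simp
  show ?thesis
  proof (cases "s = 1")
    case True then show ?thesis using r hw Tpts_vertex by simp
  next
    case False
    then have "w \<noteq> [] \<and> 0 < s \<and> s < 1" using p ws unfolding Tpts_def by auto
    then show ?thesis using r hw aut_parent[OF h w] unfolding Tpts_def by auto
  qed
qed

lemma realize_edge:
  assumes h: "is_tree_aut A h" and w: "w \<in> lists A" "w \<noteq> []" and t: "t \<in> {0..1}"
  shows "realize A h (edge_map w t) = edge_map (h w) t"
proof -
  have "edge_map w t \<in> Tpts A" using Tpts_edge[of w A t] w t by auto
  then show ?thesis using aut_parent[OF h w] unfolding realize_def edge_map_def by auto
qed

lemma realize_cont:
  assumes h: "is_tree_aut A h"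
  shows "continuous_map (T_top A) (T_top A) (realize A h)"
  unfolding continuous_map_def topspace_T_top
proof (intro conjI allI impI Pi_I)
  fix p assume "p \<in> Tpts A" then show "realize A h p \<in> Tpts A" by (rule realize_Tpts[OF h])
next
  fix S assume S: "openin (T_top A) S"
  show "openin (T_top A) {x \<in> Tpts A. realize A h x \<in> S}" unfolding openin_T_top T_open_def
  proof (intro conjI ballI)
    fix w assume w: "w \<in> lists A - {[]}"
    have hw: "h w \<in> lists A - {[]}" using w aut_lists[OF h] aut_parent[OF h] by auto
    have "{t\<in>{0..1::real}. edge_map w t \<in> {x \<in> Tpts A. realize A h x \<in> S}} =
          {t\<in>{0..1::real}. edge_map (h w) t \<in> S}"
    proof -
      have wl: "w \<in> lists A" "w \<noteq> []" using w by auto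
      have "edge_map w t \<in> {x \<in> Tpts A. realize A h x \<in> S} \<longleftrightarrow> edge_map (h w) t \<in> S"
        if t: "t \<in> {0..1}" for t
        using realize_edge[OF h wl t] Tpts_edge[OF wl, of t] t by auto
      then show ?thesis by blast
    qed
    moreover have "openin (top_of_set {0..1::real}) {t\<in>{0..1}. edge_map (h w) t \<in> S}"
      using S hw unfolding openin_T_top T_open_def by blast
    ultimately show "openin (top_of_set {0..1::real}) {t\<in>{0..1}. edge_map w t \<in> {x \<in> Tpts A. realize A h x \<in> S}}"
      by simp
  qed blast
qed

lemma realize_inv:
  assumes h: "is_tree_aut A h" and p: "p \<in> Tpts A"
  shows "realize A (inv_into (lists A) h) (realize A h p) = p"
proof -
  have b: "bij_betw h (lists A) (lists A)" using h unfolding is_tree_aut_def by blast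
  have "fst p \<in> lists A" using Tpts_fst[OF p] .
  then show ?thesis using realize_Tpts[OF h p] p b unfolding realize_def
    by (simp add: bij_betw_inv_into_left)
qed

lemma realize_homeo:
  assumes h: "is_tree_aut A h"
  shows "homeomorphic_map (T_top A) (T_top A) (realize A h)"
proof -
  have h': "is_tree_aut A (inv_into (lists A) h)" by (rule aut_inv[OF h])
  have e2: "realize A h (realize A (inv_into (lists A) h) p) = p" if "p \<in> Tpts A" for p
  proof -
    have b: "bij_betw h (lists A) (lists A)" using h unfolding is_tree_aut_def by (rule conjunct1)
    have ii: "inv_into (lists A) (inv_into (lists A) h) x = h x" if "x \<in> lists A" for x
      by (rule inv_into_inv_into_eq[OF b that])
    have "realize A (inv_into (lists A) (inv_into (lists A) h)) = realize A h"
    proof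
      fix q show "realize A (inv_into (lists A) (inv_into (lists A) h)) q = realize A h q"
        unfolding realize_def by (cases "q \<in> Tpts A") (simp_all add: ii[OF Tpts_fst])
    qed
    then show ?thesis using realize_inv[OF h' that] by simp
  qed
  show ?thesis unfolding homeomorphic_map_maps homeomorphic_maps_def
    by (intro exI[of _ "realize A (inv_into (lists A) h)"] conjI realize_cont h h' ballI)
       (simp_all add: topspace_T_top realize_inv[OF h] e2)
qed



lemma realize_wire:
  assumes h: "is_tree_aut A h" and g: "\<gamma> \<in> wires A"
  shows "realize A h \<circ> \<gamma> \<in> wires A"
proof -
  have rg: "range \<gamma> \<subseteq> Tpts A" and ig: "inj \<gamma>" and cg: "continuous_map euclideanreal (T_top A) \<gamma>"
    and hg: "homeomorphic_map euclideanreal (subtopology (T_top A) (range \<gamma>)) \<gamma>"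
    using g unfolding wires_def by auto
  have r1: "range (realize A h \<circ> \<gamma>) \<subseteq> Tpts A"
  proof
    fix y assume "y \<in> range (realize A h \<circ> \<gamma>)"
    then obtain x where x: "y = realize A h (\<gamma> x)" by auto
    have "\<gamma> x \<in> Tpts A" using rg by blast
    from realize_Tpts[OF h this] show "y \<in> Tpts A" using x by simp
  qed
  have r2: "inj (realize A h \<circ> \<gamma>)"
  proof (rule injI)
    fix x y assume "(realize A h \<circ> \<gamma>) x = (realize A h \<circ> \<gamma>) y"
    then have "realize A (inv_into (lists A) h) (realize A h (\<gamma> x)) =
               realize A (inv_into (lists A) h) (realize A h (\<gamma> y))" by simp
    moreover have gx: "\<gamma> x \<in> Tpts A" and gy: "\<gamma> y \<in> Tpts A" using rg by blast+
    ultimately have "\<gamma> x = \<gamma> y" using realize_inv[OF h gx] realize_inv[OF h gy] by simp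
    then show "x = y" using ig by (simp add: inj_eq)
  qed
  have r3: "continuous_map euclideanreal (T_top A) (realize A h \<circ> \<gamma>)"
    by (rule continuous_map_compose[OF cg realize_cont[OF h]])
  have hr: "homeomorphic_map (subtopology (T_top A) (range \<gamma>)) (subtopology (T_top A) (range (realize A h \<circ> \<gamma>))) (realize A h)"
  proof (rule homeomorphic_map_subtopologies[OF realize_homeo[OF h]])
    show "realize A h ` (topspace (T_top A) \<inter> range \<gamma>) = topspace (T_top A) \<inter> range (realize A h \<circ> \<gamma>)"
      using rg r1 unfolding topspace_T_top by (auto simp: image_comp)
  qed
  have r4: "homeomorphic_map euclideanreal (subtopology (T_top A) (range (realize A h \<circ> \<gamma>))) (realize A h \<circ> \<gamma>)"
    by (rule homeomorphic_map_compose[OF hg hr])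
  show ?thesis unfolding wires_def using r1 r2 r3 r4 by blast
qed

definition rplot :: "'a set \<Rightarrow> ('a list \<Rightarrow> 'a list) \<Rightarrow> nat \<Rightarrow> (nat \<Rightarrow> real) set \<Rightarrow> ((nat \<Rightarrow> real) \<Rightarrow> 'a list \<times> real) \<Rightarrow> bool" where
  "rplot A h n U R \<longleftrightarrow> openin (Rn_top n) U \<and> R ` U \<subseteq> Tpts A \<and> wire_plot A n U (realize A h \<circ> R)"

lemma WD: "is_diffeology (Tpts A) (wire_plot A)" by (rule gen_plot_diffeology[OF wires_range])

lemma rplot_diffeology:
  assumes h: "is_tree_aut A h"
  shows "is_diffeology (Tpts A) (rplot A h)"
  unfolding is_diffeology_def
  apply (intro conjI allI impI)
  subgoal unfolding rplot_def by (elim conjE)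
  subgoal unfolding rplot_def by (elim conjE)
  subgoal for n U P Q
  proof -
    assume a: "rplot A h n U P \<and> (\<forall>u\<in>U. Q u = P u)"
    have "wire_plot A n U (realize A h \<circ> Q)"
      by (rule diff_ext[OF WD, where n=n and U=U and P="realize A h \<circ> P"]) (use a in \<open>auto simp: rplot_def\<close>)
    moreover have "Q ` U \<subseteq> Tpts A" using a unfolding rplot_def by auto
    ultimately show ?thesis using a unfolding rplot_def by blast
  qed
  subgoal for n U x
  proof -
    assume a: "openin (Rn_top n) U \<and> x \<in> Tpts A"
    have "wire_plot A n U (\<lambda>_. realize A h x)"
      by (rule diff_const[OF WD]) (use a realize_Tpts[OF h] in auto)
    moreover have "realize A h \<circ> (\<lambda>_. x) = (\<lambda>_. realize A h x)" by auto
    ultimately show ?thesis using a unfolding rplot_def by auto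
  qed
  subgoal for n U P m V F
  proof -
    assume a: "rplot A h n U P \<and> openin (Rn_top m) V \<and> smooth_map m V n U F"
    have FV: "F ` V \<subseteq> U" using a unfolding smooth_map_def by blast
    have "wire_plot A m V ((realize A h \<circ> P) \<circ> F)"
      by (rule diff_comp[OF WD, where n=n and U=U and m=m and V=V and F=F]) (use a in \<open>auto simp: rplot_def\<close>)
    then have "wire_plot A m V (realize A h \<circ> (P \<circ> F))" by (simp add: comp_assoc)
    moreover have "(P \<circ> F) ` V \<subseteq> Tpts A" using a FV unfolding rplot_def by auto
    ultimately show ?thesis using a unfolding rplot_def by blast
  qed
  subgoal for n U P
  proof -
    assume a: "openin (Rn_top n) U \<and> P ` U \<subseteq> Tpts A \<and>
       (\<forall>u\<in>U. \<exists>V. openin (Rn_top n) V \<and> u \<in> V \<and> V \<subseteq> U \<and> rplot A h n V P)"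
    have "wire_plot A n U (realize A h \<circ> P)"
    proof (rule diff_sheaf[OF WD])
      show "openin (Rn_top n) U" using a by blast
      show "(realize A h \<circ> P) ` U \<subseteq> Tpts A"
      proof
        fix y assume "y \<in> (realize A h \<circ> P) ` U"
        then obtain x where x: "x \<in> U" "y = realize A h (P x)" by auto
        have "P x \<in> Tpts A" using a x(1) by blast
        from realize_Tpts[OF h this] show "y \<in> Tpts A" using x(2) by simp
      qed
      fix u assume "u \<in> U"
      then show "\<exists>V. openin (Rn_top n) V \<and> u \<in> V \<and> V \<subseteq> U \<and> wire_plot A n V (realize A h \<circ> P)"
        using a unfolding rplot_def by blast
    qed
    then show ?thesis using a unfolding rplot_def by blast
  qed
  done

lemma wire_plot_realize:
  assumes h: "is_tree_aut A h" and R: "wire_plot A n U R"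
  shows "wire_plot A n U (realize A h \<circ> R)"
proof -
  have gen: "\<forall>g\<in>wires A. rplot A h 1 (Rn 1) (\<lambda>x. g (x 0))"
  proof
    fix g assume g: "g \<in> wires A"
    have "wire_plot A 1 (Rn 1) (\<lambda>x. (realize A h \<circ> g) (x 0))"
      using realize_wire[OF h g] unfolding gen_plot_def by blast
    moreover have "(\<lambda>x. g (x 0)) ` Rn 1 \<subseteq> Tpts A" using g unfolding wires_def by auto
    ultimately show "rplot A h 1 (Rn 1) (\<lambda>x. g (x 0))" unfolding rplot_def using openin_Rn_self
      by (simp add: comp_def)
  qed
  have "rplot A h n U R" by (rule gen_plotD[OF R rplot_diffeology[OF h] gen])
  then show ?thesis unfolding rplot_def by blast
qed

lemma backward:
  assumes dp: "discrete_plot (AutT A) k U P"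
  shows "aut_plot A k U P"
proof -
  have U: "openin (Rn_top k) U" and PU: "P ` U \<subseteq> AutT A"
    and loc: "\<forall>u\<in>U. \<exists>V. openin (Rn_top k) V \<and> u \<in> V \<and> V \<subseteq> U \<and> (\<forall>v\<in>V. P v = P u)"
    using dp unfolding discrete_plot_def by auto
  have rep: "\<exists>g. is_tree_aut A g \<and> P u = realize A g" if "u \<in> U" for u
    using PU that unfolding AutT_def by auto
  have "wire_plot A m W (\<lambda>w. P (F w) (Q w))"
    if W: "openin (Rn_top m) W" and F: "smooth_map m W k U F" and Q: "wire_plot A m W Q" for m W F Q
  proof (rule diff_sheaf[OF WD W])
    have FW: "F ` W \<subseteq> U" using F unfolding smooth_map_def by blast
    have QW: "Q ` W \<subseteq> Tpts A" using diff_base[OF WD Q] by blast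
    show "(\<lambda>w. P (F w) (Q w)) ` W \<subseteq> Tpts A"
    proof
      fix y assume "y \<in> (\<lambda>w. P (F w) (Q w)) ` W"
      then obtain w where w: "w \<in> W" "y = P (F w) (Q w)" by blast
      obtain g where g: "is_tree_aut A g" "P (F w) = realize A g" using rep FW w(1) by blast
      have "Q w \<in> Tpts A" using QW w(1) by blast
      from realize_Tpts[OF g(1) this] show "y \<in> Tpts A" using w(2) g(2) by simp
    qed
    fix w0 assume w0: "w0 \<in> W"
    have u0: "F w0 \<in> U" using FW w0 by blast
    obtain V where V: "openin (Rn_top k) V" "F w0 \<in> V" "V \<subseteq> U" "\<forall>v\<in>V. P v = P (F w0)"
      using loc u0 by blast
    obtain g where g: "is_tree_aut A g" "P (F w0) = realize A g" using rep u0 by blast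
    define W' where "W' = {w\<in>W. F w \<in> V}"
    have oW': "openin (Rn_top m) W'" unfolding W'_def
      by (rule openin_Rn_top_preimage[OF W smooth_map_cont[OF F U] FW V(1) V(3) U])
    have W'W: "W' \<subseteq> W" unfolding W'_def by blast
    have "wire_plot A m W' (Q \<circ> id)"
      by (rule diff_comp[OF WD Q oW' smooth_map_id[OF W'W]])
    then have "wire_plot A m W' (realize A g \<circ> (Q \<circ> id))" by (rule wire_plot_realize[OF g(1)])
    then have "wire_plot A m W' (\<lambda>w. P (F w) (Q w))"
    proof (rule diff_ext[OF WD])
      fix w assume "w \<in> W'"
      then have "P (F w) = realize A g" using V(4) g(2) unfolding W'_def by auto
      then show "P (F w) (Q w) = (realize A g \<circ> (Q \<circ> id)) w" by simp
    qed
    then show "\<exists>V. openin (Rn_top m) V \<and> w0 \<in> V \<and> V \<subseteq> W \<and> wire_plot A m V (\<lambda>w. P (F w) (Q w))"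
      using oW' W'W w0 V(2) unfolding W'_def by blast
  qed
  then show ?thesis unfolding aut_plot_def using U PU by blast
qed


theorem mainTheorem7:
  fixes A :: "'a set" and k :: nat and U :: "(nat \<Rightarrow> real) set"
    and P :: "(nat \<Rightarrow> real) \<Rightarrow> ('a list \<times> real \<Rightarrow> 'a list \<times> real)"
  assumes "finite A" and "card A \<ge> 2"
  shows "aut_plot A k U P \<longleftrightarrow> discrete_plot (AutT A) k U P"
proof
  assume "aut_plot A k U P" then show "discrete_plot (AutT A) k U P" by (rule forward)
next
  assume "discrete_plot (AutT A) k U P" then show "aut_plot A k U P" by (rule backward)
qed

end
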